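(* In the linear setting of the context with $\theta>0$ and $\lambda=(1-\sigma)\kappa$, for all $t\ge0$, $$\frac{d}{dt}V(x(t))\le(\sigma-1)\kappa V(x(t))+\frac{1}{\theta}\Big(V(x(0))e^{(\sigma-1)\kappa t}-V(x(t))\Big).$$
   Context: Consider $\dot x=Ax+Bu$, $x\in\mathbb{R}^n$, $u\in\mathbb{R}^m$, and a gain $K$ such that $A+BK$ is Hurwitz; let $P,Q$ be symmetric positive definite with $(A+BK)^\top P+P(A+BK)=-Q$, $V(x)=x^\top Px$, and $\kappa>0$ with $Q\ge\kappa P$. The input is $u(t)=Kx(t_i)$ for $t\in[t_i,t_{i+1})$, with $e(t)=x(t_i)-x(t)$, so $\dot x=Ax+BK(x+e)$. $g(t^-)$ is the left limit. Dynamic event generator with parameters $\sigma\in(0,1)$, $\lambda>0$, $\theta\ge0$: $\dot\eta=-\lambda\eta+\sigma x^\top Qx-2x^\top PBKe$, $\eta(0)=0$; $t_0=0$, $t_{i+1}=\inf\{t>t_i:\ \eta(t)+\theta(\sigma x(t)^\top Qx(t)-2x(t)^\top PBKe(t^-))\le0\}$. Assume $x(t_i)\ne0$ for all $i$. *)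

theory Defs
  imports "HOL-Analysis.Analysis"
begin

definition sym_mat :: "real^'n^'n \<Rightarrow> bool" where
  "sym_mat M \<longleftrightarrow> transpose M = M"

definition pos_def_mat :: "real^'n^'n \<Rightarrow> bool" where
  "pos_def_mat M \<longleftrightarrow> sym_mat M \<and> (\<forall>v. v \<noteq> 0 \<longrightarrow> v \<bullet> (M *v v) > 0)"

definition hurwitz :: "real^'n^'n \<Rightarrow> bool" where
  "hurwitz M \<longleftrightarrow> (\<forall>(l::complex) (v::complex^'n).
      v \<noteq> 0 \<and> (\<chi> i j. complex_of_real (M $ i $ j)) *v v = l *s v \<longrightarrow> Re l < 0)"

definition qf :: "real^'n \<Rightarrow> real^'n^'n \<Rightarrow> real^'n \<Rightarrow> real" where
  "qf x M y = x \<bullet> (M *v y)"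

end

theory Submission
  imports Defs
begin

lemma right_deriv_nonincr:
  fixes f f' :: "real \<Rightarrow> real"
  assumes ab: "a \<le> b" and cont: "continuous_on {a..b} f"
   and der: "\<And>s. a \<le> s \<Longrightarrow> s < b \<Longrightarrow> (f has_real_derivative f' s) (at s within {s..})"
   and neg: "\<And>s. a \<le> s \<Longrightarrow> s < b \<Longrightarrow> f' s \<le> 0"
  shows "f b \<le> f a"
proof -
  have key: "f b \<le> f a + e*(b-a)" if e: "e>0" for e
  proof -
    define S where "S = {s \<in> {a..b}. f s \<le> f a + e*(s-a)}"
    have clS: "closed S" unfolding S_def
      by (rule continuous_on_closed_Collect_le[OF cont]) (auto intro!: continuous_intros)
    have aS: "a \<in> S" using ab by (simp add: S_def)
    have bdd: "bdd_above S" unfolding S_def by (rule bdd_aboveI[of _ b]) auto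
    define c where "c = Sup S"
    have cS: "c \<in> S" unfolding c_def using closed_contains_Sup[OF _ bdd clS] aS by blast
    have cb: "c \<le> b" "a \<le> c" using cS by (auto simp: S_def)
    have "c = b"
    proof (rule ccontr)
      assume "c \<noteq> b" then have cb2: "c < b" using cb by simp
      have "((\<lambda>y. (f y - f c)/(y - c)) \<longlongrightarrow> f' c) (at c within {c..})"
        using der[OF cb(2) cb2] by (simp add: has_field_derivative_iff)
      moreover have "f' c < e" using neg[OF cb(2) cb2] e by simp
      ultimately have "eventually (\<lambda>y. (f y - f c)/(y - c) < e) (at c within {c..})"
        by (rule order_tendstoD(2))
      then obtain d where d: "d > 0" and dP: "\<And>y. y \<in> {c..} \<Longrightarrow> y \<noteq> c \<Longrightarrow> dist y c < d \<Longrightarrow> (f y - f c)/(y - c) < e"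
        unfolding eventually_at by blast
      define y where "y = c + min d (b - c) / 2"
      have y1: "c < y" "y < b" "dist y c < d" using d cb2 by (auto simp: y_def dist_real_def min_def field_simps)
      have "(f y - f c)/(y - c) < e" using dP y1 by auto
      then have "f y - f c < e * (y - c)" using y1 by (simp add: divide_less_eq)
      moreover have "f c \<le> f a + e*(c-a)" using cS by (simp add: S_def)
      ultimately have "y \<in> S" using y1 cb by (auto simp: S_def algebra_simps)
      then have "y \<le> c" unfolding c_def using bdd by (rule cSup_upper)
      then show False using y1 by simp
    qed
    then show ?thesis using cS by (simp add: S_def)
  qed
  show ?thesis
  proof (rule field_le_epsilon)
    fix e :: real assume e: "0 < e"
    have "f b \<le> f a + (e/(b-a+1))*(b-a)" using key[of "e/(b-a+1)"] e ab by simp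
    also have "(e/(b-a+1))*(b-a) \<le> e" using e ab by (simp add: field_simps)
    finally show "f b \<le> f a + e" by simp
  qed
qed

lemma quad_sym: assumes "transpose P = P" shows "(u::real^'n) \<bullet> (P *v w) = w \<bullet> (P *v u)"
proof -
  have "u \<bullet> (P *v w) = (u v* P) \<bullet> w" by (simp add: dot_lmul_matrix)
  also have "u v* P = P *v u" by (metis assms transpose_matrix_vector)
  finally show ?thesis by (simp add: inner_commute)
qed

lemma uminus_mv: "(- Q) *v (v::real^'n) = - (Q *v v)"
  by (simp add: matrix_vector_mult_def vec_eq_iff sum_negf)

lemma lyap_id:
  fixes M P Q :: "real^'n^'n"
  assumes "transpose M ** P + P ** M = - Q" "transpose P = P"
  shows "2 * (v \<bullet> (P *v (M *v v))) = - (v \<bullet> (Q *v v))"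
proof -
  have "- (Q *v v) = (transpose M ** P) *v v + (P ** M) *v v"
    using assms(1) by (metis uminus_mv matrix_vector_mult_add_rdistrib)
  hence "- (v \<bullet> (Q *v v)) = v \<bullet> ((transpose M ** P) *v v) + v \<bullet> ((P ** M) *v v)"
    by (metis inner_add_right inner_minus_right)
  also have "v \<bullet> ((transpose M ** P) *v v) = (M *v v) \<bullet> (P *v v)"
    by (metis dot_lmul_matrix matrix_vector_mul_assoc vector_transpose_matrix)
  also have "\<dots> = v \<bullet> (P *v (M *v v))" using quad_sym[OF assms(2)] by simp
  finally show ?thesis by (simp add: matrix_vector_mul_assoc)
qed


lemma deriv_V:
  fixes A :: "real^'n^'n" and B :: "real^'m^'n" and K :: "real^'n^'m"
    and P Q :: "real^'n^'n" and x :: "real \<Rightarrow> real^'n"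
  assumes Psym: "transpose P = P"
    and lyap: "transpose (A + B ** K) ** P + P ** (A + B ** K) = - Q"
    and xd: "(x has_vector_derivative (A *v x s + B *v (K *v w))) (at s within {s..})"
  shows "((\<lambda>s. qf (x s) P (x s)) has_real_derivative
          (- qf (x s) Q (x s) + 2 * qf (x s) (P ** B ** K) (w - x s))) (at s within {s..})"
proof -
  let ?d = "A *v x s + B *v (K *v w)"
  have Pd: "((\<lambda>s. P *v x s) has_vector_derivative P *v ?d) (at s within {s..})"
    using bounded_linear.has_vector_derivative[OF matrix_vector_mul_bounded_linear xd] .
  have "((\<lambda>s. x s \<bullet> (P *v x s)) has_vector_derivative (x s \<bullet> (P *v ?d) + ?d \<bullet> (P *v x s))) (at s within {s..})"
    using bounded_bilinear.has_vector_derivative[OF bounded_bilinear_inner xd Pd] .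
  hence D: "((\<lambda>s. x s \<bullet> (P *v x s)) has_real_derivative (x s \<bullet> (P *v ?d) + ?d \<bullet> (P *v x s))) (at s within {s..})"
    by (simp add: has_real_derivative_iff_has_vector_derivative)
  have e1: "?d = (A + B ** K) *v x s + (B ** K) *v (w - x s)"
    by (simp add: matrix_vector_mult_add_rdistrib matrix_vector_right_distrib
        matrix_vector_mult_diff_distrib matrix_vector_mul_assoc[symmetric])
  have "x s \<bullet> (P *v ?d) + ?d \<bullet> (P *v x s) = 2 * (x s \<bullet> (P *v ?d))"
    using quad_sym[OF Psym, of "x s" ?d] by simp
  also have "\<dots> = 2 * (x s \<bullet> (P *v ((A + B ** K) *v x s))) + 2 * (x s \<bullet> ((P ** B ** K) *v (w - x s)))"
    unfolding e1 by (simp add: matrix_vector_right_distrib inner_add_right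
        matrix_vector_mul_assoc[symmetric] algebra_simps)
  also have "\<dots> = - qf (x s) Q (x s) + 2 * qf (x s) (P ** B ** K) (w - x s)"
    using lyap_id[OF lyap Psym, of "x s"] by (simp add: qf_def)
  finally show ?thesis using D by (simp add: qf_def)
qed

theorem mainTheorem7:
  fixes A :: "real^'n^'n" and B :: "real^'m^'n" and K :: "real^'n^'m"
    and P Q :: "real^'n^'n" and \<kappa> \<sigma> lam \<theta> :: real
    and x :: "real \<Rightarrow> real^'n" and \<eta> :: "real \<Rightarrow> real"
    and tt :: "nat \<Rightarrow> ereal"
  assumes hurw: "hurwitz (A + B ** K)"
    and P_pd: "pos_def_mat P" and Q_pd: "pos_def_mat Q"
    and lyap: "transpose (A + B ** K) ** P + P ** (A + B ** K) = - Q"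
    and kappa_pos: "\<kappa> > 0"
    and Q_ge: "\<forall>v. qf v Q v \<ge> \<kappa> * qf v P v"
    and sigma: "0 < \<sigma>" "\<sigma> < 1"
    and theta_pos: "\<theta> > 0"
    and lambda_def: "lam = (1 - \<sigma>) * \<kappa>"
    (* event times: t_0 = 0, t_{i+1} = inf {...} (inf of empty set = \<infinity>) *)
    and t0: "tt 0 = 0"
    and t_next: "\<forall>i. tt (Suc i) = Inf (ereal ` {s. tt i < ereal s \<and>
          \<eta> s + \<theta> * (\<sigma> * qf (x s) Q (x s)
             - 2 * qf (x s) (P ** B ** K) (x (real_of_ereal (tt i)) - x s)) \<le> 0})"
    (* the closed-loop solution exists on [0,\<infinity>) (no Zeno behaviour) *)
    and cover: "\<forall>t\<ge>0. \<exists>i. tt i \<le> ereal t \<and> ereal t < tt (Suc i)"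
    and x_nz: "\<forall>i. tt i \<noteq> \<infinity> \<longrightarrow> x (real_of_ereal (tt i)) \<noteq> 0"
    (* plant dynamics with sample-and-hold input u(t) = K x(t_i) *)
    and x_cont: "continuous_on {0..} x"
    and x_ode: "\<forall>i t. tt i \<le> ereal t \<and> ereal t < tt (Suc i) \<longrightarrow>
          (x has_vector_derivative
             (A *v x t + B *v (K *v x (real_of_ereal (tt i))))) (at t within {t..})"
    (* dynamic variable \<eta> *)
    and eta0: "\<eta> 0 = 0"
    and eta_cont: "continuous_on {0..} \<eta>"
    and eta_ode: "\<forall>i t. tt i \<le> ereal t \<and> ereal t < tt (Suc i) \<longrightarrow>
          (\<eta> has_real_derivative
             (- lam * \<eta> t + \<sigma> * qf (x t) Q (x t)
              - 2 * qf (x t) (P ** B ** K) (x (real_of_ereal (tt i)) - x t))) (at t within {t..})"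
  shows "\<forall>t\<ge>0. \<exists>D. ((\<lambda>s. qf (x s) P (x s)) has_real_derivative D) (at t within {t..}) \<and>
           D \<le> (\<sigma> - 1) * \<kappa> * qf (x t) P (x t)
                + (1 / \<theta>) * (qf (x 0) P (x 0) * exp ((\<sigma> - 1) * \<kappa> * t) - qf (x t) P (x t))"
proof (intro allI impI)
  fix t :: real assume t0': "0 \<le> t"
  have Psym: "transpose P = P" using P_pd by (simp add: pos_def_mat_def sym_mat_def)
  define V where "V s = qf (x s) P (x s)" for s
  define g where "g s = exp (lam * s) * (V s + \<eta> s)" for s
  have dV: "\<And>i s. tt i \<le> ereal s \<Longrightarrow> ereal s < tt (Suc i) \<Longrightarrow> (V has_real_derivative
      (- qf (x s) Q (x s) + 2 * qf (x s) (P ** B ** K) (x (real_of_ereal (tt i)) - x s))) (at s within {s..})"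
    unfolding V_def using deriv_V[OF Psym lyap] x_ode by blast
  have Pc: "continuous_on {0..} (\<lambda>s. P *v x s)"
    by (rule bounded_linear.continuous_on[OF matrix_vector_mul_bounded_linear x_cont])
  have Vcont: "continuous_on {0..} V" unfolding V_def qf_def
    by (intro continuous_intros x_cont Pc)
  have gcont: "continuous_on {0..} g" unfolding g_def by (intro continuous_intros Vcont eta_cont)
  have gdec: "g t \<le> g 0"
  proof (rule right_deriv_nonincr[where f=g and a=0 and b=t and f'="\<lambda>s. exp (lam * s) * (lam * V s - (1-\<sigma>) * qf (x s) Q (x s))"])
    show "0 \<le> t" by fact
    show "continuous_on {0..t} g" using gcont by (rule continuous_on_subset) auto
  next
    fix s :: real assume s: "0 \<le> s" "s < t"
    obtain i where i: "tt i \<le> ereal s" "ereal s < tt (Suc i)" using cover s by auto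
    have deta: "(\<eta> has_real_derivative (- lam * \<eta> s + \<sigma> * qf (x s) Q (x s)
              - 2 * qf (x s) (P ** B ** K) (x (real_of_ereal (tt i)) - x s))) (at s within {s..})"
      using eta_ode i by blast
    have de: "((\<lambda>s. exp (lam * s)) has_real_derivative exp (lam * s) * lam) (at s within {s..})"
      by (auto intro!: derivative_eq_intros)
    have "(g has_real_derivative exp (lam * s) * lam * (V s + \<eta> s) + exp (lam * s) *
        ((- qf (x s) Q (x s) + 2 * qf (x s) (P ** B ** K) (x (real_of_ereal (tt i)) - x s))
        + (- lam * \<eta> s + \<sigma> * qf (x s) Q (x s)
              - 2 * qf (x s) (P ** B ** K) (x (real_of_ereal (tt i)) - x s)))) (at s within {s..})"
      unfolding g_def using DERIV_mult[OF de DERIV_add[OF dV[OF i] deta]] by (simp add: mult.commute)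
    moreover have "exp (lam * s) * lam * (V s + \<eta> s) + exp (lam * s) *
        ((- qf (x s) Q (x s) + 2 * qf (x s) (P ** B ** K) (x (real_of_ereal (tt i)) - x s))
        + (- lam * \<eta> s + \<sigma> * qf (x s) Q (x s)
              - 2 * qf (x s) (P ** B ** K) (x (real_of_ereal (tt i)) - x s)))
       = exp (lam * s) * (lam * V s - (1-\<sigma>) * qf (x s) Q (x s))"
      by (simp add: algebra_simps)
    ultimately show "(g has_real_derivative exp (lam * s) * (lam * V s - (1-\<sigma>) * qf (x s) Q (x s))) (at s within {s..})"
      by simp
  next
    fix s :: real assume s: "0 \<le> s" "s < t"
    have "(1-\<sigma>) * (\<kappa> * V s) \<le> (1-\<sigma>) * qf (x s) Q (x s)"
      using Q_ge sigma by (intro mult_left_mono) (auto simp: V_def)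
    hence "lam * V s - (1-\<sigma>) * qf (x s) Q (x s) \<le> 0" by (simp add: lambda_def algebra_simps)
    thus "exp (lam * s) * (lam * V s - (1-\<sigma>) * qf (x s) Q (x s)) \<le> 0"
      by (simp add: mult_nonpos_nonneg mult_le_0_iff)
  qed
  hence "exp (lam * t) * (V t + \<eta> t) \<le> V 0" by (simp add: g_def eta0)
  hence etab: "\<eta> t \<le> V 0 * exp ((\<sigma> - 1) * \<kappa> * t) - V t"
  proof -
    assume h: "exp (lam * t) * (V t + \<eta> t) \<le> V 0"
    have "V t + \<eta> t \<le> V 0 / exp (lam * t)" using h by (simp add: pos_le_divide_eq mult.commute)
    also have "\<dots> = V 0 * exp ((\<sigma> - 1) * \<kappa> * t)"
      by (simp add: lambda_def exp_minus[symmetric] divide_inverse algebra_simps)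
    finally show ?thesis by simp
  qed
  obtain i where i: "tt i \<le> ereal t" "ereal t < tt (Suc i)" using cover t0' by auto
  define w where "w = x (real_of_ereal (tt i))"
  define h where "h s = \<eta> s + \<theta> * (\<sigma> * qf (x s) Q (x s) - 2 * qf (x s) (P ** B ** K) (w - x s))" for s
  have Qc: "continuous_on {0..} (\<lambda>s. Q *v x s)"
    by (rule bounded_linear.continuous_on[OF matrix_vector_mul_bounded_linear x_cont])
  have Nc: "continuous_on {0..} (\<lambda>s. (P ** B ** K) *v (w - x s))"
    by (rule bounded_linear.continuous_on[OF matrix_vector_mul_bounded_linear]) (intro continuous_intros x_cont)
  have hcont: "continuous_on {0..} h" unfolding h_def qf_def
    by (intro continuous_intros x_cont eta_cont Qc Nc)
  have hpos: "0 \<le> h t"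
  proof (rule ccontr)
    assume "\<not> 0 \<le> h t"
    hence ht: "0 < - h t" by simp
    obtain d where d: "d > 0" and dP: "\<And>s. s \<in> {0..} \<Longrightarrow> dist s t < d \<Longrightarrow> dist (h s) (h t) < - h t"
      using hcont t0' ht unfolding continuous_on_iff by (metis atLeast_iff)
    obtain z where z: "ereal t < ereal z" "ereal z < tt (Suc i)" using ereal_dense2[OF i(2)] by blast
    define s where "s = min z (t + d/2)"
    have s1: "t < s" "dist s t < d" "0 \<le> s" using z d t0' by (auto simp: s_def dist_real_def)
    have s2: "ereal s < tt (Suc i)" using z(2) by (metis ereal_less_eq(3) min.cobounded1 order.strict_trans1 s_def)
    have "h s < 0" using dP[of s] s1 by (auto simp: dist_real_def)
    moreover have "tt i < ereal s" using i(1) s1 by (meson ereal_less_eq(3) le_less_trans less_eq_real_def not_le)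
    ultimately have "s \<in> {s. tt i < ereal s \<and>
          \<eta> s + \<theta> * (\<sigma> * qf (x s) Q (x s)
             - 2 * qf (x s) (P ** B ** K) (x (real_of_ereal (tt i)) - x s)) \<le> 0}"
      by (simp add: h_def w_def)
    hence "Inf (ereal ` {s. tt i < ereal s \<and>
          \<eta> s + \<theta> * (\<sigma> * qf (x s) Q (x s)
             - 2 * qf (x s) (P ** B ** K) (x (real_of_ereal (tt i)) - x s)) \<le> 0}) \<le> ereal s"
      by (intro Inf_lower) auto
    hence "tt (Suc i) \<le> ereal s" using t_next by simp
    thus False using s2 by simp
  qed
  let ?a = "qf (x t) Q (x t)" and ?b = "qf (x t) (P ** B ** K) (x (real_of_ereal (tt i)) - x t)"
  have dVt: "(V has_real_derivative (- ?a + 2 * ?b)) (at t within {t..})" using dV[OF i] .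
  have hb: "0 \<le> \<eta> t + \<theta> * (\<sigma> * ?a - 2 * ?b)" using hpos by (simp add: h_def w_def)
  have ak: "\<kappa> * V t \<le> ?a" using Q_ge by (simp add: V_def)
  have b2: "2 * ?b \<le> \<sigma> * ?a + \<eta> t / \<theta>"
  proof -
    have "\<theta> * (2 * ?b) \<le> \<theta> * (\<sigma> * ?a + \<eta> t / \<theta>)" using hb theta_pos by (simp add: algebra_simps)
    thus ?thesis using theta_pos by simp
  qed
  have "- ?a + 2 * ?b \<le> - ((1 - \<sigma>) * ?a) + \<eta> t / \<theta>" using b2 by (simp add: algebra_simps)
  also have "- ((1 - \<sigma>) * ?a) \<le> - ((1 - \<sigma>) * (\<kappa> * V t))"
    using ak sigma by (simp add: mult_left_mono)
  also have "\<eta> t / \<theta> \<le> (V 0 * exp ((\<sigma> - 1) * \<kappa> * t) - V t) / \<theta>"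
    using etab theta_pos by (simp add: divide_right_mono)
  finally have "- ?a + 2 * ?b \<le> (\<sigma> - 1) * \<kappa> * V t + (1 / \<theta>) * (V 0 * exp ((\<sigma> - 1) * \<kappa> * t) - V t)"
    by (simp add: algebra_simps diff_divide_distrib)
  thus "\<exists>D. ((\<lambda>s. qf (x s) P (x s)) has_real_derivative D) (at t within {t..}) \<and>
           D \<le> (\<sigma> - 1) * \<kappa> * qf (x t) P (x t)
                + (1 / \<theta>) * (qf (x 0) P (x 0) * exp ((\<sigma> - 1) * \<kappa> * t) - qf (x t) P (x t))"
    using dVt unfolding V_def by blast
qed

end
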